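(* Let $\mathbb{X}\subset\mathbb{R}^n$ be a Lebesgue-measurable compact set and let $f:\mathbb{R}^n\to\mathbb{R}$ be positive homogeneous with $f|_{\mathbb{X}}$ Lebesgue integrable. Then for every $\epsilon>0$ there exists a finite-layer feed-forward ReLU neural network (with biases) $\mathcal{A}$ of width at most $n+4$, representing $\mathcal{F}_{\mathcal A}$, such that $$\int_{\mathbb{X}}\Big|\,|x|\,\mathcal{F}_{\mathcal A}\big(x/|x|\big)-f(x)\Big|\,dx<\epsilon .$$
   Context: $|\cdot|$ denotes the $\ell^1$ norm on $\mathbb{R}^n$ (the integrand is defined for $x\neq0$; the point $0$ has measure zero). A function $g$ is positive homogeneous iff $g(\lambda x)=\lambda g(x)$ for all $x$ and all $\lambda>0$. The width of a feed-forward network is the maximal number of neurons in a hidden layer. *)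

theory Defs
  imports "HOL-Analysis.Analysis"
begin

definition l1norm :: "real^'n \<Rightarrow> real" where
  "l1norm x = (\<Sum>i\<in>UNIV. \<bar>x $ i\<bar>)"

definition pos_homogeneous :: "(real^'n \<Rightarrow> real) \<Rightarrow> bool" where
  "pos_homogeneous g \<longleftrightarrow> (\<forall>x. \<forall>c::real. c > 0 \<longrightarrow> g (c *\<^sub>R x) = c * g x)"

definition relu :: "real \<Rightarrow> real" where
  "relu t = max 0 t"

text \<open>The first layer is given by a list of
  weight rows in real^'n and a list of biases (one neuron per row); each further
  layer is given by a list of weight rows (real lists) and biases. ReLU is applied
  after every layer except the last; the last layer must have exactly one neuron
  (scalar output, affine, no activation).\<close>
type_synonym 'n first_layer = "(real^'n) list \<times> real list"
type_synonym layer = "real list list \<times> real list"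
type_synonym 'n relu_net = "'n first_layer \<times> layer list"

definition affine_first :: "'n first_layer \<Rightarrow> real^'n \<Rightarrow> real list" where
  "affine_first L x = map2 (\<lambda>w c. w \<bullet> x + c) (fst L) (snd L)"

definition affine :: "layer \<Rightarrow> real list \<Rightarrow> real list" where
  "affine L v = map2 (\<lambda>w c. sum_list (map2 (*) w v) + c) (fst L) (snd L)"

text \<open>\<open>run Ls v\<close>: v is the pre-activation of the previous layer.\<close>
fun run :: "layer list \<Rightarrow> real list \<Rightarrow> real list" where
  "run [] v = v"
| "run (L # Ls) v = run Ls (affine L (map relu v))"

fun valid_layers :: "nat \<Rightarrow> layer list \<Rightarrow> bool" where
  "valid_layers d [] \<longleftrightarrow> d = 1"
| "valid_layers d (L # Ls) \<longleftrightarrow>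
     (\<forall>w\<in>set (fst L). length w = d) \<and> length (fst L) = length (snd L)
     \<and> valid_layers (length (fst L)) Ls"

definition valid_net :: "'n relu_net \<Rightarrow> bool" where
  "valid_net N \<longleftrightarrow> length (fst (fst N)) = length (snd (fst N))
                   \<and> valid_layers (length (fst (fst N))) (snd N)"

definition net_fun :: "'n relu_net \<Rightarrow> real^'n \<Rightarrow> real" where
  "net_fun N x = hd (run (snd N) (affine_first (fst N) x))"

text \<open>Numbers of neurons of all layers; the hidden layers are all but the last.\<close>
definition layer_sizes :: "'n relu_net \<Rightarrow> nat list" where
  "layer_sizes N = length (fst (fst N)) # map (\<lambda>L. length (fst L)) (snd N)"

definition net_width :: "'n relu_net \<Rightarrow> nat" where
  "net_width N = Max (insert 0 (set (butlast (layer_sizes N))))"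

end

theory Submission
  imports Defs
begin

definition dotl :: "real list \<Rightarrow> real list \<Rightarrow> real" where
  "dotl u v = sum_list (map2 (*) u v)"

lemma dotl_append: "length u1 = length v1 \<Longrightarrow> dotl (u1 @ u2) (v1 @ v2) = dotl u1 v1 + dotl u2 v2"
  by (simp add: dotl_def)

lemma dotl_zeros: "dotl (replicate n 0) v = 0"
proof (induction n arbitrary: v)
  case (Suc n) then show ?case by (cases v) (auto simp: dotl_def)
qed (simp add: dotl_def)

lemma dotl_nth_sum: "length u = length v \<Longrightarrow> dotl u v = (\<Sum>k<length u. u!k * v!k)"
  unfolding dotl_def by (simp add: sum_list_sum_nth atLeast0LessThan)

lemma sum_delta_mult: "(\<Sum>k<(m::nat). (if k = j then (1::real) else 0) * f k) = (if j < m then f j else 0)"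
proof -
  have e: "(\<lambda>k. (if k = j then (1::real) else 0) * f k) = (\<lambda>k. if k = j then f k else 0)" by auto
  show ?thesis by (simp only: e) (simp add: sum.delta)
qed

lemma dotl_unit: "j < length v \<Longrightarrow> dotl (map (\<lambda>k. if k = j then 1 else 0) [0..<length v]) v = v!j"
  by (subst dotl_nth_sum) (auto simp: sum_delta_mult)

lemma dotl_upd: assumes "j < length v" shows "dotl ((replicate (length v) 0)[j := g]) v = g * v!j"
proof -
  have "dotl ((replicate (length v) 0)[j := g]) v = (\<Sum>k<length v. (replicate (length v) 0)[j := g] ! k * v ! k)"
    by (subst dotl_nth_sum) auto
  also have "\<dots> = (\<Sum>k<length v. if k = j then g * v!j else 0)"
    by (rule sum.cong) (auto simp: nth_list_update)
  also have "\<dots> = g * v!j" using assms by (simp add: sum.delta)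
  finally show ?thesis .
qed

lemma dotl4: "dotl [a1,a2,a3,a4] [b1,b2,b3,b4] = a1*b1+a2*b2+a3*b3+a4*b4"
  by (simp add: dotl_def)

definition hl :: "nat \<Rightarrow> real list \<Rightarrow> real list \<Rightarrow> real list \<Rightarrow> real list \<Rightarrow> real list \<Rightarrow> real \<Rightarrow> layer" where
  "hl n pc qA qB qL qW bW =
    (map (\<lambda>j. map (\<lambda>k. if k = j then 1 else 0) [0..<n+4]) [0..<n] @
       [replicate n 0 @ qA, replicate n 0 @ qB, replicate n 0 @ qL, pc @ qW],
     replicate n 0 @ [0,0,0,bW])"

lemma affine_hl:
  assumes "length cs = n" "length pc = n" "length r = 4"
  shows "affine (hl n pc qA qB qL qW bW) (cs @ r) =
     cs @ [dotl qA r, dotl qB r, dotl qL r, dotl pc cs + dotl qW r + bW]"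
proof -
  have 1: "map2 (\<lambda>w c. sum_list (map2 (*) w (cs @ r)) + c)
      (map (\<lambda>j. map (\<lambda>k. if k = j then 1 else 0) [0..<n+4]) [0..<n]) (replicate n 0) = cs"
  proof (rule nth_equalityI)
    fix i assume "i < length (map2 (\<lambda>w c. sum_list (map2 (*) w (cs @ r)) + c)
      (map (\<lambda>j. map (\<lambda>k. if k = j then 1 else 0) [0..<n+4]) [0..<n]) (replicate n 0))"
    then have i: "i < n" by simp
    have "sum_list (map2 (*) (map (\<lambda>k. if k = i then 1 else 0) [0..<n+4]) (cs @ r)) = (cs @ r) ! i"
      using dotl_unit[of i "cs @ r"] i assms by (simp add: dotl_def)
    then show "map2 (\<lambda>w c. sum_list (map2 (*) w (cs @ r)) + c)
      (map (\<lambda>j. map (\<lambda>k. if k = j then 1 else 0) [0..<n+4]) [0..<n]) (replicate n 0) ! i = cs ! i"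
      using i assms by (simp add: nth_append)
  qed (use assms in simp)
  show ?thesis
    unfolding hl_def affine_def using assms
    by (simp add: zip_append 1 dotl_append[symmetric] dotl_zeros)
      (simp add: dotl_def dotl_zeros[unfolded dotl_def])
qed

lemma relu_nonneg: "relu x \<ge> 0" by (simp add: relu_def)
lemma relu_id: "x \<ge> 0 \<Longrightarrow> relu x = x" by (simp add: relu_def)

lemma run_hl:
  assumes "length cs = n" "length pc = n" "\<forall>c\<in>set cs. 0 \<le> c"
    "length qA = 4" "length qB = 4" "length qL = 4" "length qW = 4"
  shows "run (hl n pc qA qB qL qW bW # Ls) (cs @ [A,B,L,W]) =
    run Ls (cs @ [dotl qA [relu A, relu B, relu L, relu W], dotl qB [relu A, relu B, relu L, relu W],
                  dotl qL [relu A, relu B, relu L, relu W],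
                  dotl pc cs + dotl qW [relu A, relu B, relu L, relu W] + bW])"
proof -
  have "map relu cs = cs" using assms(3) by (induction cs) (auto simp: relu_id)
  then show ?thesis using assms by (simp add: affine_hl)
qed

definition clampf :: "real \<Rightarrow> real" where "clampf z = relu (1 - relu (1 - z))"

lemma clampf_nonneg: "clampf z \<ge> 0" by (simp add: clampf_def relu_def)

definition clampL :: "nat \<Rightarrow> nat \<Rightarrow> real \<Rightarrow> real \<Rightarrow> layer list" where
  "clampL n j g d = [hl n ((replicate n 0)[j:=g]) [1,0,0,0] [0,1,0,0] [0,0,1,0] [0,0,0,0] d,
     hl n (replicate n 0) [1,0,0,0] [0,1,0,0] [0,0,1,0] [0,0,0,-1] 1,
     hl n (replicate n 0) [1,0,0,0] [0,1,0,0] [0,0,1,1] [0,0,0,0] 0]"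

lemma run_clampL:
  assumes "length cs = n" "j < n" "\<forall>c\<in>set cs. 0 \<le> c" "A \<ge> 0" "B \<ge> 0" "L \<ge> 0"
  shows "run (clampL n j g d @ Ls) (cs @ [A,B,L,W]) = run Ls (cs @ [A,B,L + clampf (1 - (g * cs!j + d)),0])"
proof -
  have u: "dotl ((replicate n 0)[j:=g]) cs = g * cs!j" using dotl_upd[of j cs g] assms by simp
  show ?thesis using assms
    by (simp del: run.simps add: clampL_def run_hl u dotl_zeros dotl4 relu_id relu_nonneg clampf_def)
qed

lemma run_concat_gen:
  assumes "\<And>j L Ls. j \<in> set js \<Longrightarrow> L \<ge> 0 \<Longrightarrow> run (cl j @ Ls) (cs @ [A,B,L,0]) = run Ls (cs @ [A,B,L + v j,0])"
    "\<And>j. j \<in> set js \<Longrightarrow> v j \<ge> 0" "L \<ge> 0"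
  shows "run (concat (map cl js) @ Ls) (cs @ [A,B,L,0]) = run Ls (cs @ [A,B,L + sum_list (map v js),0])"
  using assms
proof (induction js arbitrary: L)
  case (Cons j js)
  have "run (concat (map cl (j # js)) @ Ls) (cs @ [A,B,L,0]) = run (cl j @ (concat (map cl js) @ Ls)) (cs @ [A,B,L,0])"
    by simp
  also have "\<dots> = run (concat (map cl js) @ Ls) (cs @ [A,B,L + v j,0])"
    using Cons.prems by simp
  also have "\<dots> = run Ls (cs @ [A,B,L + v j + sum_list (map v js),0])"
    using Cons.prems by (intro Cons.IH) auto
  finally show ?case by (simp add: add.assoc)
qed simp

definition ufun :: "(real^'n) list \<Rightarrow> real^'n \<Rightarrow> real^'n \<Rightarrow> real \<Rightarrow> real^'n \<Rightarrow> real" where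
  "ufun bs a b K y = relu (sum_list (map (\<lambda>i. clampf (K*(y\<bullet>i - a\<bullet>i)) + clampf (K*(b\<bullet>i - y\<bullet>i))) bs)
      - (2 * real (length bs) - 1))"

definition unitL :: "(real^'n) list \<Rightarrow> real \<times> (real^'n) \<times> (real^'n) \<times> real \<Rightarrow> layer list" where
  "unitL bs u = (case u of (c,a,b,K) \<Rightarrow>
   concat (map (\<lambda>j. clampL (length bs) j (-K) (1 + K*(2 + a\<bullet>bs!j)) @ clampL (length bs) j K (1 - K*(b\<bullet>bs!j + 2)))
     [0..<length bs]) @
   [hl (length bs) (replicate (length bs) 0) [1,0,0,0] [0,1,0,0] [0,0,0,0] [0,0,1,0] (-(2*real (length bs) - 1)),
    hl (length bs) (replicate (length bs) 0) [1,0,0,max c 0] [0,1,0,max (-c) 0] [0,0,0,0] [0,0,0,0] 0])"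

lemma map_nth_comp: "map (\<lambda>j. h (xs!j)) [0..<length xs] = map h xs"
  by (rule nth_equalityI) auto

lemma run_unitL:
  assumes cs: "cs = map (\<lambda>i. y\<bullet>i + 2) bs" and y: "\<forall>i\<in>set bs. \<bar>y\<bullet>i\<bar> \<le> 2" and "A \<ge> 0" "B \<ge> 0"
  shows "run (unitL bs (c,a,b,K) @ Ls) (cs @ [A,B,0,0]) =
    run Ls (cs @ [A + max c 0 * ufun bs a b K y, B + max (-c) 0 * ufun bs a b K y, 0, 0])"
proof -
  let ?n = "length bs"
  have lc: "length cs = ?n" using cs by simp
  have pos: "\<forall>c\<in>set cs. 0 \<le> c" using cs y by (auto simp: abs_le_iff)
  define v where "v j = clampf (K*(y\<bullet>bs!j - a\<bullet>bs!j)) + clampf (K*(b\<bullet>bs!j - y\<bullet>bs!j))" for j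
  define S where "S = sum_list (map (\<lambda>i. clampf (K*(y\<bullet>i - a\<bullet>i)) + clampf (K*(b\<bullet>i - y\<bullet>i))) bs)"
  have S: "sum_list (map v [0..<?n]) = S"
    unfolding v_def S_def by (subst map_nth_comp[where h = "\<lambda>i. clampf (K*(y\<bullet>i - a\<bullet>i)) + clampf (K*(b\<bullet>i - y\<bullet>i))"]) simp
  have Snn: "S \<ge> 0" unfolding S_def by (intro sum_list_nonneg) (auto intro!: add_nonneg_nonneg clampf_nonneg)
  have step: "run ((clampL ?n j (-K) (1 + K*(2 + a\<bullet>bs!j)) @ clampL ?n j K (1 - K*(b\<bullet>bs!j + 2))) @ Ls') (cs @ [A,B,L,0])
     = run Ls' (cs @ [A,B,L + v j,0])" if "j \<in> set [0..<?n]" "L \<ge> 0" for j L Ls'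
  proof -
    have j: "j < ?n" using that by simp
    have csj: "cs!j = y\<bullet>bs!j + 2" using cs j by simp
    have "run ((clampL ?n j (-K) (1 + K*(2 + a\<bullet>bs!j)) @ clampL ?n j K (1 - K*(b\<bullet>bs!j + 2))) @ Ls') (cs @ [A,B,L,0])
      = run (clampL ?n j (-K) (1 + K*(2 + a\<bullet>bs!j)) @ (clampL ?n j K (1 - K*(b\<bullet>bs!j + 2)) @ Ls')) (cs @ [A,B,L,0])"
      by simp
    also have "\<dots> = run (clampL ?n j K (1 - K*(b\<bullet>bs!j + 2)) @ Ls')
       (cs @ [A,B,L + clampf (1 - (-K * cs!j + (1 + K*(2 + a\<bullet>bs!j)))),0])"
      by (rule run_clampL) (use lc j pos assms that in auto)
    also have "\<dots> = run Ls' (cs @ [A,B,L + clampf (1 - (-K * cs!j + (1 + K*(2 + a\<bullet>bs!j))))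
         + clampf (1 - (K * cs!j + (1 - K*(b\<bullet>bs!j + 2)))),0])"
      by (rule run_clampL) (use lc j pos assms that in \<open>auto intro!: add_nonneg_nonneg clampf_nonneg\<close>)
    also have "1 - (-K * cs!j + (1 + K*(2 + a\<bullet>bs!j))) = K*(y\<bullet>bs!j - a\<bullet>bs!j)"
      by (simp add: csj algebra_simps)
    also have "1 - (K * cs!j + (1 - K*(b\<bullet>bs!j + 2))) = K*(b\<bullet>bs!j - y\<bullet>bs!j)"
      by (simp add: csj algebra_simps)
    finally show ?thesis by (simp add: v_def add.assoc)
  qed
  have "run (unitL bs (c,a,b,K) @ Ls) (cs @ [A,B,0,0]) =
     run (concat (map (\<lambda>j. clampL ?n j (-K) (1 + K*(2 + a\<bullet>bs!j)) @ clampL ?n j K (1 - K*(b\<bullet>bs!j + 2))) [0..<?n])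
        @ ([hl ?n (replicate ?n 0) [1,0,0,0] [0,1,0,0] [0,0,0,0] [0,0,1,0] (-(2*real ?n - 1)),
    hl ?n (replicate ?n 0) [1,0,0,max c 0] [0,1,0,max (-c) 0] [0,0,0,0] [0,0,0,0] 0] @ Ls)) (cs @ [A,B,0,0])"
    by (simp add: unitL_def)
  also have "\<dots> = run ([hl ?n (replicate ?n 0) [1,0,0,0] [0,1,0,0] [0,0,0,0] [0,0,1,0] (-(2*real ?n - 1)),
    hl ?n (replicate ?n 0) [1,0,0,max c 0] [0,1,0,max (-c) 0] [0,0,0,0] [0,0,0,0] 0] @ Ls) (cs @ [A,B,0 + sum_list (map v [0..<?n]),0])"
    by (rule run_concat_gen) (use step in \<open>auto simp: v_def intro!: add_nonneg_nonneg clampf_nonneg\<close>)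
  also have "\<dots> = run Ls (cs @ [A + max c 0 * relu (S - (2 * real ?n - 1)), B + max (-c) 0 * relu (S - (2 * real ?n - 1)), 0, 0])"
    using lc pos Snn assms
    by (simp del: run.simps add: S run_hl dotl_zeros dotl4 relu_id relu_nonneg) (simp add: algebra_simps)
  finally show ?thesis by (simp add: ufun_def S_def)
qed

definition bl :: "(real^'n::finite) list" where "bl = (SOME l. distinct l \<and> set l = Basis)"

lemma bl: "distinct (bl :: (real^'n) list) \<and> set (bl :: (real^'n) list) = Basis"
  unfolding bl_def by (rule someI_ex) (use finite_distinct_list[OF finite_Basis] in metis)

lemma length_bl: "length (bl :: (real^'n) list) = CARD('n)"
  using bl[where 'n='n] distinct_card[of "bl :: (real^'n) list"] by simp

type_synonym 'n gl = "(real \<times> (real^'n) \<times> (real^'n) \<times> real) list"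

definition gfun :: "('n::finite) gl \<Rightarrow> real^'n \<Rightarrow> real" where
  "gfun gs y = sum_list (map (\<lambda>(c,a,b,K). c * ufun bl a b K y) gs)"

definition finalL :: "nat \<Rightarrow> layer" where
  "finalL n = ([replicate n 0 @ [1,-1,0,0]], [0])"

definition netof :: "('n::finite) gl \<Rightarrow> 'n relu_net" where
  "netof gs = ((bl @ replicate 4 0, replicate (length (bl :: (real^'n) list)) 2 @ replicate 4 0),
      concat (map (unitL bl) gs) @ [finalL (length (bl :: (real^'n) list))])"

lemma run_units:
  assumes cs: "cs = map (\<lambda>i. y\<bullet>i + 2) bs" and y: "\<forall>i\<in>set bs. \<bar>y\<bullet>i\<bar> \<le> 2" and "A \<ge> 0" "B \<ge> 0"
  shows "run (concat (map (unitL bs) gs) @ Ls) (cs @ [A,B,0,0]) =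
    run Ls (cs @ [A + sum_list (map (\<lambda>(c,a,b,K). max c 0 * ufun bs a b K y) gs),
                  B + sum_list (map (\<lambda>(c,a,b,K). max (-c) 0 * ufun bs a b K y) gs), 0, 0])"
  using assms(3,4)
proof (induction gs arbitrary: A B)
  case (Cons u gs)
  obtain c a b K where u: "u = (c,a,b,K)" by (cases u) auto
  have un: "ufun bs a b K y \<ge> 0" by (simp add: ufun_def relu_nonneg)
  have "run (concat (map (unitL bs) (u # gs)) @ Ls) (cs @ [A,B,0,0]) =
     run (unitL bs (c,a,b,K) @ (concat (map (unitL bs) gs) @ Ls)) (cs @ [A,B,0,0])" by (simp add: u)
  also have "\<dots> = run (concat (map (unitL bs) gs) @ Ls)
      (cs @ [A + max c 0 * ufun bs a b K y, B + max (-c) 0 * ufun bs a b K y, 0, 0])"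
    by (rule run_unitL) (use assms Cons.prems in auto)
  also have "\<dots> = run Ls (cs @ [A + max c 0 * ufun bs a b K y + sum_list (map (\<lambda>(c,a,b,K). max c 0 * ufun bs a b K y) gs),
                  B + max (-c) 0 * ufun bs a b K y + sum_list (map (\<lambda>(c,a,b,K). max (-c) 0 * ufun bs a b K y) gs), 0, 0])"
    by (rule Cons.IH) (use Cons.prems un in auto)
  finally show ?case by (simp add: u add.assoc)
qed simp

lemma sum_split_max: fixes h :: "'a \<Rightarrow> 'b \<Rightarrow> 'c \<Rightarrow> real" and gs :: "(real \<times> 'a \<times> 'b \<times> 'c) list"
  shows "sum_list (map (\<lambda>(c,a,b,K). max c 0 * h a b K) gs) - sum_list (map (\<lambda>(c,a,b,K). max (-c) 0 * h a b K) gs)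
   = sum_list (map (\<lambda>(c,a,b,K). c * h a b K) gs)"
proof (induction gs)
  case (Cons u gs)
  obtain c a b K where u: "u = (c,a,b,K)" by (cases u) auto
  have "max c 0 * h a b K - max (-c) 0 * h a b K = c * h a b K" by (simp add: max_def algebra_simps)
  then show ?case using Cons by (simp add: u algebra_simps)
qed simp

lemma net_fun_netof:
  fixes y :: "real^'n"
  assumes "\<forall>i\<in>Basis. \<bar>y\<bullet>i\<bar> \<le> 2"
  shows "net_fun (netof gs) y = gfun gs y"
proof -
  let ?bs = "bl :: (real^'n) list"
  let ?n = "length ?bs"
  let ?cs = "map (\<lambda>i. y\<bullet>i + 2) ?bs"
  have y: "\<forall>i\<in>set ?bs. \<bar>y\<bullet>i\<bar> \<le> 2" using assms bl by auto
  have af: "affine_first (fst (netof gs)) y = ?cs @ [0,0,0,0]"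
    unfolding affine_first_def netof_def by (simp add: zip_append map_replicate_const zip_map_fst_snd
      zip_replicate2 map_zip_map2 inner_commute numeral_eq_Suc cong: map_cong)
  have "net_fun (netof gs) y = hd (run (concat (map (unitL ?bs) gs) @ [finalL ?n]) (?cs @ [0,0,0,0]))"
    unfolding net_fun_def af by (simp add: netof_def)
  also have "\<dots> = hd (run [finalL ?n] (?cs @ [0 + sum_list (map (\<lambda>(c,a,b,K). max c 0 * ufun ?bs a b K y) gs),
                  0 + sum_list (map (\<lambda>(c,a,b,K). max (-c) 0 * ufun ?bs a b K y) gs), 0, 0]))"
    by (subst run_units[OF refl y]) auto
  also have "\<dots> = relu (sum_list (map (\<lambda>(c,a,b,K). max c 0 * ufun ?bs a b K y) gs))
     - relu (sum_list (map (\<lambda>(c,a,b,K). max (-c) 0 * ufun ?bs a b K y) gs))"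
    by (simp add: finalL_def affine_def zip_append dotl_zeros[unfolded dotl_def])
  also have "\<dots> = gfun gs y"
  proof -
    have u: "ufun ?bs a b K y \<ge> 0" for a b K by (simp add: ufun_def relu_nonneg)
    have "sum_list (map (\<lambda>(c,a,b,K). max c 0 * ufun ?bs a b K y) gs) \<ge> 0"
      "sum_list (map (\<lambda>(c,a,b,K). max (-c) 0 * ufun ?bs a b K y) gs) \<ge> 0"
      by (auto intro!: sum_list_nonneg simp: u)
    then show ?thesis by (simp add: relu_id sum_split_max gfun_def)
  qed
  finally show ?thesis .
qed

definition goodL :: "nat \<Rightarrow> layer \<Rightarrow> bool" where
  "goodL d L \<longleftrightarrow> length (fst L) = d \<and> length (snd L) = d \<and> (\<forall>w\<in>set (fst L). length w = d)"

lemma valid_layers_append: "\<forall>L\<in>set Ls1. goodL d L \<Longrightarrow> valid_layers d (Ls1 @ Ls2) = valid_layers d Ls2"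
  by (induction Ls1) (auto simp: goodL_def)

lemma goodL_hl: "length pc = n \<Longrightarrow> length qA = 4 \<Longrightarrow> length qB = 4 \<Longrightarrow> length qL = 4 \<Longrightarrow> length qW = 4 \<Longrightarrow>
   goodL (n+4) (hl n pc qA qB qL qW bW)"
  by (auto simp: goodL_def hl_def)

lemma goodL_unitL: "L \<in> set (unitL bs u) \<Longrightarrow> goodL (length bs + 4) L"
  by (cases u) (auto simp: unitL_def clampL_def intro!: goodL_hl)

lemma valid_netof: "valid_net (netof (gs :: ('n::finite) gl))"
proof -
  let ?n = "length (bl :: (real^'n) list)"
  have "valid_layers (?n + 4) (concat (map (unitL bl) gs) @ [finalL ?n])"
    by (subst valid_layers_append) (auto simp: goodL_unitL finalL_def)
  then show ?thesis unfolding valid_net_def netof_def by simp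
qed

lemma width_netof: "net_width (netof (gs :: ('n::finite) gl)) \<le> CARD('n) + 4"
proof -
  let ?n = "length (bl :: (real^'n) list)"
  have "set (butlast (layer_sizes (netof gs))) \<subseteq> {?n + 4}"
    unfolding layer_sizes_def netof_def
    using goodL_unitL[of _ "bl :: (real^'n) list"] by (auto simp: goodL_def butlast_append)
  then have "Max (insert 0 (set (butlast (layer_sizes (netof gs))))) \<le> ?n + 4"
    by (intro Max.boundedI) auto
  then show ?thesis by (simp add: net_width_def length_bl)
qed


lemma clampf_le1: "clampf z \<le> 1" by (simp add: clampf_def relu_def)
lemma clampf_0: "z \<le> 0 \<Longrightarrow> clampf z = 0" by (simp add: clampf_def relu_def)
lemma clampf_1: "z \<ge> 1 \<Longrightarrow> clampf z = 1" by (simp add: clampf_def relu_def)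

lemma sum_bl: "sum_list (map h (bl :: (real^'n::finite) list)) = (\<Sum>i\<in>Basis. h i)"
  using bl[where 'n='n] by (simp add: sum_list_distinct_conv_sum_set)

lemma card_Basis_vec: "card (Basis :: (real^'n::finite) set) = CARD('n)" by simp

lemma ufun_bl: "ufun (bl :: (real^'n::finite) list) a b K y =
   relu ((\<Sum>i\<in>Basis. clampf (K*(y\<bullet>i - a\<bullet>i)) + clampf (K*(b\<bullet>i - y\<bullet>i))) - (2 * real CARD('n) - 1))"
  by (simp add: ufun_def sum_bl length_bl)

lemma ufun_range: "0 \<le> ufun (bl :: (real^'n::finite) list) a b K y \<and> ufun bl a b K y \<le> 1"
proof -
  have "(\<Sum>i\<in>(Basis::(real^'n) set). clampf (K*(y\<bullet>i - a\<bullet>i)) + clampf (K*(b\<bullet>i - y\<bullet>i))) \<le> (\<Sum>i\<in>(Basis::(real^'n) set). 2)"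
    by (intro sum_mono) (auto intro: add_mono clampf_le1[THEN order_trans] simp: clampf_le1 add_mono[OF clampf_le1 clampf_le1, simplified])
  then show ?thesis by (auto simp: ufun_bl relu_def)
qed

lemma ufun_out:
  fixes y :: "real^'n::finite"
  assumes "y \<notin> box a b" "K \<ge> 0"
  shows "ufun bl a b K y = 0"
proof -
  obtain i where i: "i \<in> Basis" "y\<bullet>i \<le> a\<bullet>i \<or> b\<bullet>i \<le> y\<bullet>i" using assms(1) by (auto simp: mem_box not_less)
  let ?h = "\<lambda>i. clampf (K*(y\<bullet>i - a\<bullet>i)) + clampf (K*(b\<bullet>i - y\<bullet>i))"
  have hi: "?h i \<le> 1"
  proof (cases "y\<bullet>i \<le> a\<bullet>i")
    case True
    then have "K*(y\<bullet>i - a\<bullet>i) \<le> 0" using assms(2) by (simp add: mult_nonneg_nonpos)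
    then show ?thesis by (simp add: clampf_0 clampf_le1)
  next
    case False
    then have "K*(b\<bullet>i - y\<bullet>i) \<le> 0" using i assms(2) by (simp add: mult_nonneg_nonpos)
    then show ?thesis by (simp add: clampf_0 clampf_le1)
  qed
  have "(\<Sum>j\<in>Basis. ?h j) = ?h i + (\<Sum>j\<in>Basis - {i}. ?h j)"
    using i by (simp add: sum.remove)
  also have "\<dots> \<le> 1 + (\<Sum>j\<in>(Basis::(real^'n) set) - {i}. 2)"
    by (intro add_mono hi sum_mono) (simp add: add_mono[OF clampf_le1 clampf_le1, simplified])
  also have "\<dots> = 1 + 2 * (real CARD('n) - 1)" using i by (simp add: card_Diff_singleton)
  finally show ?thesis by (simp add: ufun_bl relu_def)
qed

lemma ufun_in:
  fixes y :: "real^'n::finite"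
  assumes "y \<in> box a b"
  shows "\<exists>K0. \<forall>K\<ge>K0. ufun bl a b K y = 1"
proof -
  have pos: "\<forall>i\<in>Basis. 0 < y\<bullet>i - a\<bullet>i \<and> 0 < b\<bullet>i - y\<bullet>i" using assms by (auto simp: mem_box)
  define m where "m = Min ((\<lambda>i. min (y\<bullet>i - a\<bullet>i) (b\<bullet>i - y\<bullet>i)) ` (Basis :: (real^'n) set))"
  have mpos: "m > 0" unfolding m_def using pos by (subst Min_gr_iff) auto
  have mle: "m \<le> y\<bullet>i - a\<bullet>i" "m \<le> b\<bullet>i - y\<bullet>i" if "i \<in> Basis" for i
    unfolding m_def using that by (auto intro!: Min_le_iff[THEN iffD2] bexI[where x=i])
  show ?thesis
  proof (intro exI allI impI)
    fix K assume K: "K \<ge> 1/m"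
    have ge: "1 \<le> K * t" if "m \<le> t" for t
    proof -
      have "1 = (1/m) * m" using mpos by simp
      also have "\<dots> \<le> K * t" using K that mpos by (intro mult_mono) (auto simp: order_trans[OF _ K])
      finally show ?thesis .
    qed
    have "(\<Sum>i\<in>(Basis::(real^'n) set). clampf (K*(y\<bullet>i - a\<bullet>i)) + clampf (K*(b\<bullet>i - y\<bullet>i))) = (\<Sum>i\<in>(Basis::(real^'n) set). 2)"
      by (intro sum.cong refl) (simp add: clampf_1 ge mle)
    then show "ufun bl a b K y = 1" by (simp add: ufun_bl relu_def)
  qed
qed

lemma ufun_lim:
  fixes y :: "real^'n::finite"
  shows "(\<lambda>k. ufun bl a b (real k) y) \<longlonglongrightarrow> indicator (box a b) y"
proof (cases "y \<in> box a b")
  case True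
  then obtain K0 where "\<forall>K\<ge>K0. ufun bl a b K y = 1" using ufun_in by blast
  moreover have "real k \<ge> K0" if "k \<ge> nat \<lceil>K0\<rceil>" for k
    using that by (metis of_nat_mono real_nat_ceiling_ge order_trans)
  ultimately have "eventually (\<lambda>k. ufun bl a b (real k) y = indicator (box a b) y) sequentially"
    using True unfolding eventually_sequentially by (auto intro!: exI[where x="nat \<lceil>K0\<rceil>"])
  then show ?thesis by (rule tendsto_eventually)
next
  case False
  then show ?thesis by (simp add: ufun_out)
qed


lemma cont_meas_leb: "continuous_on UNIV (f :: 'a::euclidean_space \<Rightarrow> 'b::euclidean_space) \<Longrightarrow> f \<in> borel_measurable lebesgue"
  by (metis measurable_lborel2 borel_measurable_continuous_onI measurable_completion)

lemma l1_cont: "continuous_on UNIV (l1norm :: real^'n::finite \<Rightarrow> real)"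
  unfolding l1norm_def by (intro continuous_intros)

lemma l1_nonneg: "l1norm x \<ge> 0" unfolding l1norm_def by (simp add: sum_nonneg)

lemma l1_zero: "l1norm (x::real^'n::finite) = 0 \<longleftrightarrow> x = 0"
  unfolding l1norm_def by (simp add: sum_nonneg_eq_0_iff vec_eq_iff)

lemma l1_scale: "l1norm (c *\<^sub>R (x::real^'n::finite)) = \<bar>c\<bar> * l1norm x"
  unfolding l1norm_def by (simp add: abs_mult sum_distrib_left)

lemma basis_le_l1: assumes "i \<in> (Basis :: (real^'n::finite) set)" shows "\<bar>x \<bullet> i\<bar> \<le> l1norm x"
proof -
  obtain k where k: "i = axis k 1" using assms by (auto simp: Basis_vec_def)
  have "\<bar>x \<bullet> i\<bar> = \<bar>x $ k\<bar>" by (simp add: k inner_axis)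
  also have "\<dots> \<le> l1norm x" unfolding l1norm_def by (rule member_le_sum) auto
  finally show ?thesis .
qed

definition Phi :: "real^'n::finite \<Rightarrow> real^'n" where "Phi x = x /\<^sub>R l1norm x"

lemma Phi_bound: assumes "i \<in> Basis" shows "\<bar>Phi x \<bullet> i\<bar> \<le> 1"
proof (cases "x = 0")
  case True then show ?thesis by (simp add: Phi_def)
next
  case False
  then have p: "l1norm x > 0" using l1_nonneg[of x] l1_zero[of x] by linarith
  have "\<bar>Phi x \<bullet> i\<bar> = \<bar>x \<bullet> i\<bar> / l1norm x" using p by (simp add: Phi_def abs_mult divide_inverse mult.commute)
  also have "\<dots> \<le> 1" using p basis_le_l1[OF assms, of x] by simp
  finally show ?thesis .
qed

lemma Phi_meas: "Phi \<in> borel_measurable lebesgue"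
proof -
  have "l1norm \<in> borel_measurable lebesgue" by (rule cont_meas_leb[OF l1_cont])
  moreover have "(\<lambda>x::real^'a. x) \<in> borel_measurable lebesgue" by (rule cont_meas_leb) (rule continuous_on_id)
  ultimately show ?thesis unfolding Phi_def by measurable
qed

lemma Phi_scale: "c > 0 \<Longrightarrow> Phi (c *\<^sub>R x) = Phi x"
  by (simp add: Phi_def l1_scale)

lemma cont_sum_list: fixes h :: "'a \<Rightarrow> 'b::topological_space \<Rightarrow> real" shows "(\<And>x. x \<in> set xs \<Longrightarrow> continuous_on S (h x)) \<Longrightarrow> continuous_on S (\<lambda>y. sum_list (map (\<lambda>x. h x y) xs))"
proof (induction xs)
  case (Cons a xs)
  have 1: "continuous_on S (h a)" using Cons.prems by simp
  have 2: "continuous_on S (\<lambda>y. sum_list (map (\<lambda>x. h x y) xs))" using Cons by simp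
  show ?case using continuous_on_add[OF 1 2] by simp
qed simp

lemma relu_cont: "continuous_on S g \<Longrightarrow> continuous_on S (\<lambda>x. relu (g x))"
  unfolding relu_def by (intro continuous_intros)

lemma clampf_cont: "continuous_on S g \<Longrightarrow> continuous_on S (\<lambda>x. clampf (g x))"
  unfolding clampf_def by (intro relu_cont continuous_intros)

lemma ufun_cont: "continuous_on UNIV (ufun bs a b K)"
  unfolding ufun_def[abs_def]
  by (intro relu_cont continuous_intros cont_sum_list clampf_cont)

lemma gfun_cont: "continuous_on UNIV (gfun gs)"
  unfolding gfun_def[abs_def]
  by (rule cont_sum_list) (auto intro!: continuous_intros ufun_cont split: prod.splits)

lemma gfun_Phi_meas: "(\<lambda>x. gfun gs (Phi x)) \<in> borel_measurable lebesgue"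
  by (rule measurable_compose[OF Phi_meas]) (rule borel_measurable_continuous_onI[OF gfun_cont])

lemma gfun_bound: "\<bar>gfun gs y\<bar> \<le> sum_list (map (\<lambda>(c,a,b,K). \<bar>c\<bar>) gs)"
proof (induction gs)
  case (Cons u gs)
  obtain c a b K where u: "u = (c,a,b,K)" by (cases u)
  have "\<bar>c * ufun bl a b K y\<bar> \<le> \<bar>c\<bar>" using ufun_range[of a b K y] by (simp add: abs_mult mult_left_le)
  then show ?case using Cons by (simp add: gfun_def u)
qed (simp add: gfun_def)

lemma gfun_append: "gfun (gs1 @ gs2) y = gfun gs1 y + gfun gs2 y"
  by (simp add: gfun_def)

definition scl :: "real \<Rightarrow> ('n::finite) gl \<Rightarrow> 'n gl" where
  "scl t gs = map (\<lambda>(c,a,b,K). (t*c,a,b,K)) gs"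

lemma gfun_scl: "gfun (scl t gs) y = t * gfun gs y"
  by (induction gs) (auto simp: gfun_def scl_def algebra_simps)

definition wt :: "(real^'n::finite) set \<Rightarrow> real^'n \<Rightarrow> real" where
  "wt X x = indicator X x * l1norm x"

lemma wt_nonneg: "wt X x \<ge> 0" by (simp add: wt_def l1_nonneg)

lemma wt_meas: "X \<in> sets lebesgue \<Longrightarrow> wt X \<in> borel_measurable lebesgue"
  unfolding wt_def[abs_def] by (intro borel_measurable_times borel_measurable_indicator cont_meas_leb[OF l1_cont])

lemma wt_int: assumes "compact X" shows "integrable lebesgue (wt X)"
proof -
  have "integrable lborel (\<lambda>x. indicator X x *\<^sub>R l1norm x)"
    by (rule borel_integrable_compact[OF assms]) (rule continuous_on_subset[OF l1_cont], simp)
  moreover have "(\<lambda>x. indicator X x *\<^sub>R l1norm x) \<in> borel_measurable lborel"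
    unfolding measurable_lborel1 using borel_measurable_continuous_onI[OF l1_cont] compact_imp_closed[OF assms]
    by (intro borel_measurable_scaleR borel_measurable_indicator) auto
  ultimately show ?thesis unfolding wt_def[abs_def] by (simp add: integrable_completion)
qed

definition PP :: "(real^'n::finite) set \<Rightarrow> (real^'n \<Rightarrow> real) \<Rightarrow> bool" where
  "PP X u \<longleftrightarrow> (\<forall>\<delta>>0. \<exists>gs. integrable lebesgue (\<lambda>x. wt X x * \<bar>u x - gfun gs (Phi x)\<bar>) \<and>
      (\<integral>x. wt X x * \<bar>u x - gfun gs (Phi x)\<bar> \<partial>lebesgue) < \<delta>)"

lemma PP_zero: "PP X (\<lambda>x. 0)"
  unfolding PP_def by (auto intro!: exI[of _ "[]"] simp: gfun_def)

lemma PP_scale: assumes "PP X u" shows "PP X (\<lambda>x. c * u x)"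
proof (cases "c = 0")
  case True then show ?thesis using PP_zero by simp
next
  case False
  show ?thesis unfolding PP_def
  proof (intro allI impI)
    fix \<delta> :: real assume "\<delta> > 0"
    then have "\<delta> / \<bar>c\<bar> > 0" using False by simp
    then obtain gs where gs: "integrable lebesgue (\<lambda>x. wt X x * \<bar>u x - gfun gs (Phi x)\<bar>)"
      "(\<integral>x. wt X x * \<bar>u x - gfun gs (Phi x)\<bar> \<partial>lebesgue) < \<delta> / \<bar>c\<bar>"
      using assms unfolding PP_def by blast
    have e: "wt X x * \<bar>c * u x - gfun (scl c gs) (Phi x)\<bar> = \<bar>c\<bar> * (wt X x * \<bar>u x - gfun gs (Phi x)\<bar>)" for x
      by (simp add: gfun_scl abs_mult right_diff_distrib[symmetric])
    show "\<exists>gs. integrable lebesgue (\<lambda>x. wt X x * \<bar>c * u x - gfun gs (Phi x)\<bar>) \<and>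
      (\<integral>x. wt X x * \<bar>c * u x - gfun gs (Phi x)\<bar> \<partial>lebesgue) < \<delta>"
      using gs False by (intro exI[of _ "scl c gs"]) (auto simp: e field_simps)
  qed
qed

lemma PP_add:
  assumes "PP X u" "PP X v" "u \<in> borel_measurable lebesgue" "v \<in> borel_measurable lebesgue" "X \<in> sets lebesgue"
  shows "PP X (\<lambda>x. u x + v x)"
  unfolding PP_def
proof (intro allI impI)
  fix \<delta> :: real assume d: "\<delta> > 0"
  obtain g1 where g1: "integrable lebesgue (\<lambda>x. wt X x * \<bar>u x - gfun g1 (Phi x)\<bar>)"
      "(\<integral>x. wt X x * \<bar>u x - gfun g1 (Phi x)\<bar> \<partial>lebesgue) < \<delta>/2"
    using assms(1) d unfolding PP_def by (meson half_gt_zero)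
  obtain g2 where g2: "integrable lebesgue (\<lambda>x. wt X x * \<bar>v x - gfun g2 (Phi x)\<bar>)"
      "(\<integral>x. wt X x * \<bar>v x - gfun g2 (Phi x)\<bar> \<partial>lebesgue) < \<delta>/2"
    using assms(2) d unfolding PP_def by (meson half_gt_zero)
  have le: "wt X x * \<bar>u x + v x - gfun (g1 @ g2) (Phi x)\<bar> \<le> wt X x * \<bar>u x - gfun g1 (Phi x)\<bar> + wt X x * \<bar>v x - gfun g2 (Phi x)\<bar>" for x
    using wt_nonneg[of X x] by (simp add: gfun_append distrib_left[symmetric] mult_left_mono)
  have m: "(\<lambda>x. wt X x * \<bar>u x + v x - gfun (g1 @ g2) (Phi x)\<bar>) \<in> borel_measurable lebesgue"
    using wt_meas[OF assms(5)] gfun_Phi_meas[of "g1@g2"] assms(3,4)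
    by (intro borel_measurable_times borel_measurable_abs borel_measurable_diff borel_measurable_add)
  have i: "integrable lebesgue (\<lambda>x. wt X x * \<bar>u x + v x - gfun (g1 @ g2) (Phi x)\<bar>)"
    by (rule Bochner_Integration.integrable_bound[OF Bochner_Integration.integrable_add[OF g1(1) g2(1)] m]) (use le in \<open>auto intro!: AE_I2 order_trans[OF _ abs_ge_self] simp: abs_mult abs_of_nonneg[OF wt_nonneg]\<close>)
  have "(\<integral>x. wt X x * \<bar>u x + v x - gfun (g1 @ g2) (Phi x)\<bar> \<partial>lebesgue) \<le>
     (\<integral>x. wt X x * \<bar>u x - gfun g1 (Phi x)\<bar> + wt X x * \<bar>v x - gfun g2 (Phi x)\<bar> \<partial>lebesgue)"
    by (rule Bochner_Integration.integral_mono[OF i Bochner_Integration.integrable_add[OF g1(1) g2(1)] le])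
  also have "\<dots> < \<delta>" using g1 g2 by (simp add: Bochner_Integration.integral_add[OF g1(1) g2(1)])
  finally show "\<exists>gs. integrable lebesgue (\<lambda>x. wt X x * \<bar>u x + v x - gfun gs (Phi x)\<bar>) \<and>
      (\<integral>x. wt X x * \<bar>u x + v x - gfun gs (Phi x)\<bar> \<partial>lebesgue) < \<delta>"
    using i by blast
qed

lemma PP_lim:
  assumes "u \<in> borel_measurable lebesgue" "X \<in> sets lebesgue"
    and approx: "\<And>\<delta>. \<delta> > 0 \<Longrightarrow> \<exists>v. PP X v \<and> integrable lebesgue (\<lambda>x. wt X x * \<bar>u x - v x\<bar>) \<and>
        (\<integral>x. wt X x * \<bar>u x - v x\<bar> \<partial>lebesgue) < \<delta>"
  shows "PP X u"
  unfolding PP_def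
proof (intro allI impI)
  fix \<delta> :: real assume d: "\<delta> > 0"
  obtain v where v: "PP X v" "integrable lebesgue (\<lambda>x. wt X x * \<bar>u x - v x\<bar>)"
      "(\<integral>x. wt X x * \<bar>u x - v x\<bar> \<partial>lebesgue) < \<delta>/2"
    using approx[of "\<delta>/2"] d by auto
  obtain g where g: "integrable lebesgue (\<lambda>x. wt X x * \<bar>v x - gfun g (Phi x)\<bar>)"
      "(\<integral>x. wt X x * \<bar>v x - gfun g (Phi x)\<bar> \<partial>lebesgue) < \<delta>/2"
    using v(1) d unfolding PP_def by (meson half_gt_zero)
  have le: "wt X x * \<bar>u x - gfun g (Phi x)\<bar> \<le> wt X x * \<bar>u x - v x\<bar> + wt X x * \<bar>v x - gfun g (Phi x)\<bar>" for x
    using wt_nonneg[of X x] by (simp add: distrib_left[symmetric] mult_left_mono)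
  have m: "(\<lambda>x. wt X x * \<bar>u x - gfun g (Phi x)\<bar>) \<in> borel_measurable lebesgue"
    using wt_meas[OF assms(2)] gfun_Phi_meas[of g] assms(1)
    by (intro borel_measurable_times borel_measurable_abs borel_measurable_diff)
  have i: "integrable lebesgue (\<lambda>x. wt X x * \<bar>u x - gfun g (Phi x)\<bar>)"
    by (rule Bochner_Integration.integrable_bound[OF Bochner_Integration.integrable_add[OF v(2) g(1)] m]) (use le in \<open>auto intro!: AE_I2 order_trans[OF _ abs_ge_self] simp: abs_mult abs_of_nonneg[OF wt_nonneg]\<close>)
  have "(\<integral>x. wt X x * \<bar>u x - gfun g (Phi x)\<bar> \<partial>lebesgue) \<le>
     (\<integral>x. wt X x * \<bar>u x - v x\<bar> + wt X x * \<bar>v x - gfun g (Phi x)\<bar> \<partial>lebesgue)"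
    by (rule Bochner_Integration.integral_mono[OF i Bochner_Integration.integrable_add[OF v(2) g(1)] le])
  also have "\<dots> < \<delta>" using v g by (simp add: Bochner_Integration.integral_add[OF v(2) g(1)])
  finally show "\<exists>gs. integrable lebesgue (\<lambda>x. wt X x * \<bar>u x - gfun gs (Phi x)\<bar>) \<and>
      (\<integral>x. wt X x * \<bar>u x - gfun gs (Phi x)\<bar> \<partial>lebesgue) < \<delta>"
    using i by blast
qed


lemma dc_small:
  fixes s :: "nat \<Rightarrow> 'a::euclidean_space \<Rightarrow> real"
  assumes "integrable lebesgue w" "\<And>k. s k \<in> borel_measurable lebesgue" "\<And>k x. \<bar>s k x\<bar> \<le> w x"
    "\<And>x. (\<lambda>k. s k x) \<longlonglongrightarrow> 0" "\<delta> > 0"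
  shows "\<exists>k. integrable lebesgue (s k) \<and> integral\<^sup>L lebesgue (s k) < \<delta>"
proof -
  have "(\<lambda>k. integral\<^sup>L lebesgue (s k)) \<longlonglongrightarrow> integral\<^sup>L lebesgue (\<lambda>x. 0)"
    using integral_dominated_convergence[of "\<lambda>x. 0" lebesgue s w] assms by auto
  then have "eventually (\<lambda>k. integral\<^sup>L lebesgue (s k) < \<delta>) sequentially"
    using assms(5) by (simp add: order_tendstoD(2))
  then obtain k where "integral\<^sup>L lebesgue (s k) < \<delta>" by (meson eventually_sequentially order_refl)
  moreover have "integrable lebesgue (s k)"
    by (rule integrable_dominated_convergence2[where w=w and f="\<lambda>x. 0"]) (use assms in auto)
  ultimately show ?thesis by blast
qed

lemma ind_Phi_meas: "B \<in> sets borel \<Longrightarrow> (\<lambda>x. indicator B (Phi x) :: real) \<in> borel_measurable lebesgue"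
  by (rule measurable_compose[OF Phi_meas borel_measurable_indicator])

lemma PP_box:
  assumes "compact X" "X \<in> sets lebesgue"
  shows "PP X (\<lambda>x. indicator (box a b) (Phi x))"
  unfolding PP_def
proof (intro allI impI)
  fix \<delta> :: real assume d: "\<delta> > 0"
  define s where "s k x = wt X x * \<bar>indicator (box a b) (Phi x) - gfun [(1,a,b,real k)] (Phi x)\<bar>" for k x
  have g: "gfun [(1,a,b,K)] y = ufun bl a b K y" for K y by (simp add: gfun_def)
  have "\<exists>k. integrable lebesgue (s k) \<and> integral\<^sup>L lebesgue (s k) < \<delta>"
  proof (rule dc_small[OF wt_int[OF assms(1)] _ _ _ d])
    show "s k \<in> borel_measurable lebesgue" for k
      unfolding s_def[abs_def] using wt_meas[OF assms(2)] gfun_Phi_meas ind_Phi_meas[of "box a b"]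
      by (intro borel_measurable_times borel_measurable_abs borel_measurable_diff) auto
    show "\<bar>s k x\<bar> \<le> wt X x" for k x
    proof -
      have "\<bar>indicator (box a b) (Phi x) - ufun bl a b (real k) (Phi x)\<bar> \<le> 1"
        using ufun_range[of a b "real k" "Phi x"] by (auto simp: indicator_def)
      then show ?thesis unfolding s_def g using wt_nonneg[of X x]
        by (simp add: abs_mult mult_left_le)
    qed
    show "(\<lambda>k. s k x) \<longlonglongrightarrow> 0" for x
    proof -
      have "(\<lambda>k. wt X x * \<bar>indicator (box a b) (Phi x) - ufun bl a b (real k) (Phi x)\<bar>) \<longlonglongrightarrow>
          wt X x * \<bar>indicator (box a b) (Phi x) - indicator (box a b) (Phi x)\<bar>"
        by (intro tendsto_intros ufun_lim)
      then show ?thesis unfolding s_def g by simp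
    qed
  qed
  then show "\<exists>gs. integrable lebesgue (\<lambda>x. wt X x * \<bar>indicator (box a b) (Phi x) - gfun gs (Phi x)\<bar>) \<and>
      (\<integral>x. wt X x * \<bar>indicator (box a b) (Phi x) - gfun gs (Phi x)\<bar> \<partial>lebesgue) < \<delta>"
    unfolding s_def[abs_def] by blast
qed

definition onegs :: "('n::finite) gl" where "onegs = [(1, \<chi> k. -2, \<chi> k. 2, 1)]"

lemma const_inner_basis: "i \<in> (Basis :: (real^'n::finite) set) \<Longrightarrow> (\<chi> k. c) \<bullet> i = c"
  by (auto simp: Basis_vec_def inner_axis)

lemma gfun_onegs: "gfun onegs (Phi x) = 1"
proof -
  have "(\<Sum>i\<in>(Basis::(real^'a) set). clampf (1*(Phi x\<bullet>i - (\<chi> k. -2)\<bullet>i)) + clampf (1*((\<chi> k. 2)\<bullet>i - Phi x\<bullet>i)))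
      = (\<Sum>i\<in>(Basis::(real^'a) set). 2)"
  proof (intro sum.cong refl)
    fix i :: "real^'a" assume i: "i \<in> Basis"
    have "\<bar>Phi x \<bullet> i\<bar> \<le> 1" by (rule Phi_bound[OF i])
    then show "clampf (1*(Phi x\<bullet>i - (\<chi> k. -2)\<bullet>i)) + clampf (1*((\<chi> k. 2)\<bullet>i - Phi x\<bullet>i)) = 2"
      using i by (simp add: const_inner_basis clampf_1 abs_le_iff)
  qed
  then show ?thesis by (simp add: onegs_def gfun_def ufun_bl relu_def)
qed

lemma PP_one_minus: assumes "PP X u" shows "PP X (\<lambda>x. 1 - u x)"
  unfolding PP_def
proof (intro allI impI)
  fix \<delta> :: real assume "\<delta> > 0"
  then obtain gs where gs: "integrable lebesgue (\<lambda>x. wt X x * \<bar>u x - gfun gs (Phi x)\<bar>)"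
      "(\<integral>x. wt X x * \<bar>u x - gfun gs (Phi x)\<bar> \<partial>lebesgue) < \<delta>"
    using assms unfolding PP_def by blast
  have e: "wt X x * \<bar>1 - u x - gfun (onegs @ scl (-1) gs) (Phi x)\<bar> = wt X x * \<bar>u x - gfun gs (Phi x)\<bar>" for x
    by (simp add: gfun_append gfun_onegs gfun_scl abs_minus_commute)
  show "\<exists>gs. integrable lebesgue (\<lambda>x. wt X x * \<bar>1 - u x - gfun gs (Phi x)\<bar>) \<and>
      (\<integral>x. wt X x * \<bar>1 - u x - gfun gs (Phi x)\<bar> \<partial>lebesgue) < \<delta>"
    using gs by (intro exI[of _ "onegs @ scl (-1) gs"]) (simp add: e)
qed

lemma sets_borel_box: "sets (borel :: ('a::euclidean_space) measure) = sigma_sets UNIV (range (\<lambda>(a, b). box a b :: 'a set))"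
  by (subst borel_eq_box) (simp add: sets_measure_of)

lemma Int_stable_box: "Int_stable (range (\<lambda>(a, b). box a b :: 'a::euclidean_space set))"
proof (rule Int_stableI)
  fix A B assume "A \<in> range (\<lambda>(a, b). box a b :: 'a set)" "B \<in> range (\<lambda>(a, b). box a b :: 'a set)"
  then obtain a b c d where AB: "A = box a b" "B = box c d" by auto
  have "box a b \<inter> box c d =
    box (\<Sum>i\<in>Basis. max (a\<bullet>i) (c\<bullet>i) *\<^sub>R i) (\<Sum>i\<in>Basis. min (b\<bullet>i) (d\<bullet>i) *\<^sub>R i)"
    unfolding set_eq_iff and Int_iff and mem_box by auto
  then show "A \<inter> B \<in> range (\<lambda>(a, b). box a b :: 'a set)" using AB by auto
qed

lemma PP_borel:
  assumes "compact X" "X \<in> sets lebesgue" "B \<in> sets borel"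
  shows "PP X (\<lambda>x. indicator B (Phi x))"
proof -
  have Bs: "B \<in> sigma_sets UNIV (range (\<lambda>(a, b). box a b :: (real^'a) set))"
    using assms(3) sets_borel_box by auto
  have cl: "range (\<lambda>(a, b). box a b :: (real^'a) set) \<subseteq> Pow UNIV" by auto
  from Int_stable_box cl Bs show ?thesis
  proof (induction B rule: sigma_sets_induct_disjoint)
    case (basic A)
    then show ?case using PP_box[OF assms(1,2)] by auto
  next
    case empty
    then show ?case using PP_zero by simp
  next
    case (compl A)
    have "(\<lambda>x. indicator (UNIV - A) (Phi x) :: real) = (\<lambda>x. 1 - indicator A (Phi x))"
      by (auto simp: indicator_def)
    then show ?case using PP_one_minus[OF compl.IH] by simp
  next
    case (union A)
    have Ab: "A i \<in> sets borel" for i using union.hyps(2) sets_borel_box by auto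
    define U where "U N = (\<Union>i<N. A i)" for N
    have Ub: "U N \<in> sets borel" for N unfolding U_def using Ab by auto
    have PU: "PP X (\<lambda>x. indicator (U N) (Phi x))" for N
    proof (induction N)
      case 0 then show ?case using PP_zero by (simp add: U_def)
    next
      case (Suc N)
      have "A i \<inter> A N = {}" if "i < N" for i
        using union.hyps(1) that unfolding disjoint_family_on_def by simp
      then have disj: "U N \<inter> A N = {}" unfolding U_def by blast
      have "(\<lambda>x. indicator (U (Suc N)) (Phi x) :: real) = (\<lambda>x. indicator (U N) (Phi x) + indicator (A N) (Phi x))"
      proof -
        have "U (Suc N) = U N \<union> A N" unfolding U_def by (auto simp: lessThan_Suc)
        then show ?thesis by (simp add: indicator_disj_union[OF disj])
      qed
      then show ?case
        using PP_add[OF Suc union.IH[of N] ind_Phi_meas[OF Ub] ind_Phi_meas[OF Ab] assms(2)] by simp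
    qed
    have Ubig: "(\<Union>i. A i) \<in> sets borel" using Ab by auto
    show ?case
    proof (rule PP_lim[OF ind_Phi_meas[OF Ubig] assms(2)])
      fix \<delta> :: real assume d: "\<delta> > 0"
      define s where "s N x = wt X x * \<bar>indicator (\<Union>i. A i) (Phi x) - indicator (U N) (Phi x)\<bar>" for N x
      have "\<exists>N. integrable lebesgue (s N) \<and> integral\<^sup>L lebesgue (s N) < \<delta>"
      proof (rule dc_small[OF wt_int[OF assms(1)] _ _ _ d])
        show "s k \<in> borel_measurable lebesgue" for k
          unfolding s_def[abs_def] using wt_meas[OF assms(2)] ind_Phi_meas[OF Ubig] ind_Phi_meas[OF Ub]
          by (intro borel_measurable_times borel_measurable_abs borel_measurable_diff) auto
        show "\<bar>s k x\<bar> \<le> wt X x" for k x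
          unfolding s_def using wt_nonneg[of X x] by (auto simp: indicator_def abs_mult)
        show "(\<lambda>k. s k x) \<longlonglongrightarrow> 0" for x
        proof (cases "Phi x \<in> (\<Union>i. A i)")
          case True
          then obtain j where j: "Phi x \<in> A j" by auto
          have "eventually (\<lambda>k. s k x = 0) sequentially"
          proof (unfold eventually_sequentially, intro exI[of _ "Suc j"] allI impI)
            fix n assume "Suc j \<le> n"
            then have "Phi x \<in> U n" using j unfolding U_def by auto
            then show "s n x = 0" using True by (simp add: s_def)
          qed
          then show ?thesis by (rule tendsto_eventually)
        next
          case False
          then have "Phi x \<notin> U k" for k unfolding U_def by auto
          then show ?thesis using False by (simp add: s_def)
        qed
      qed
      then show "\<exists>v. PP X v \<and> integrable lebesgue (\<lambda>x. wt X x * \<bar>indicator (\<Union>i. A i) (Phi x) - v x\<bar>) \<and>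
          (\<integral>x. wt X x * \<bar>indicator (\<Union>i. A i) (Phi x) - v x\<bar> \<partial>lebesgue) < \<delta>"
        using PU unfolding s_def[abs_def] by blast
    qed
  qed
qed


lemma Phi_eq_imp:
  assumes "Phi x = Phi k" "k \<noteq> 0" "x \<noteq> 0"
  shows "x = (l1norm x / l1norm k) *\<^sub>R k" "l1norm x / l1norm k > 0"
proof -
  have px: "l1norm x > 0" using l1_nonneg[of x] l1_zero[of x] assms by linarith
  have pk: "l1norm k > 0" using l1_nonneg[of k] l1_zero[of k] assms by linarith
  have "x = l1norm x *\<^sub>R Phi x" using px by (simp add: Phi_def)
  also have "\<dots> = l1norm x *\<^sub>R Phi k" using assms by simp
  also have "\<dots> = (l1norm x / l1norm k) *\<^sub>R k" by (simp add: Phi_def divide_inverse)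
  finally show "x = (l1norm x / l1norm k) *\<^sub>R k" .
  show "l1norm x / l1norm k > 0" using px pk by simp
qed

lemma PP_sat:
  assumes cX: "compact X" and mX: "X \<in> sets lebesgue" and mS: "S \<in> sets lebesgue" and SX: "S \<subseteq> X"
    and sat: "\<And>x t. x \<in> S \<Longrightarrow> t > 0 \<Longrightarrow> t *\<^sub>R x \<in> X \<Longrightarrow> t *\<^sub>R x \<in> S"
  shows "PP X (\<lambda>x. indicator S x)"
proof (rule PP_lim[OF borel_measurable_indicator[OF mS] mX])
  fix \<delta> :: real assume d: "\<delta> > 0"
  have "compact (l1norm ` X)" by (rule compact_continuous_image[OF continuous_on_subset[OF l1_cont] cX]) simp
  then obtain R where R0: "R > 0" "\<forall>y\<in>l1norm ` X. norm y \<le> R"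
    using bounded_pos compact_imp_bounded by blast
  then have R: "R > 0" "\<And>x. x \<in> X \<Longrightarrow> \<bar>l1norm x\<bar> \<le> R" by auto
  define e where "e = \<delta> / (2 * R)"
  have e: "e > 0" using d R by (simp add: e_def)
  have mS': "S - {0} \<in> sets lebesgue" using mS by auto
  obtain T where T: "closed T" "T \<subseteq> S - {0}" "(S - {0}) - T \<in> lmeasurable"
      "emeasure lebesgue ((S - {0}) - T) < ennreal e"
    using sets_lebesgue_inner_closed[OF mS' e] by blast
  have cT: "compact T"
    using T(1,2) SX compact_imp_bounded[OF cX] by (meson bounded_diff bounded_subset compact_eq_bounded_closed)
  have "continuous_on T Phi"
  proof -
    have "\<forall>x\<in>T. l1norm x \<noteq> 0" using T(2) l1_zero by auto
    then have "continuous_on T (\<lambda>x. inverse (l1norm x) *\<^sub>R x)"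
      by (intro continuous_intros continuous_on_subset[OF l1_cont]) auto
    then show ?thesis by (simp add: Phi_def[abs_def])
  qed
  then have cB: "compact (Phi ` T)" using cT compact_continuous_image by blast
  then have Bb: "Phi ` T \<in> sets borel" by (simp add: compact_imp_closed)
  let ?D = "(S - {0}) - T"
  have bound: "wt X x * \<bar>indicator S x - indicator (Phi ` T) (Phi x)\<bar> \<le> R * indicator ?D x" for x
  proof (cases "x \<in> X \<and> x \<noteq> 0")
    case False
    then have "wt X x = 0" by (auto simp: wt_def l1norm_def)
    then show ?thesis using R by simp
  next
    case True
    then have wle: "wt X x \<le> R" using R(2)[of x] by (simp add: wt_def)
    show ?thesis
    proof (cases "x \<in> T")
      case True
      then have "x \<in> S" using T by auto
      then show ?thesis using True R by (simp add: indicator_def)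
    next
      case xT: False
      show ?thesis
      proof (cases "x \<in> S")
        case True
        then have "x \<in> ?D" using xT \<open>x \<in> X \<and> x \<noteq> 0\<close> by auto
        moreover have "\<bar>indicator S x - indicator (Phi ` T) (Phi x) :: real\<bar> \<le> 1" by (auto simp: indicator_def)
        ultimately show ?thesis using wle wt_nonneg[of X x]
          by (simp add: indicator_def)
      next
        case False
        have "Phi x \<notin> Phi ` T"
        proof
          assume "Phi x \<in> Phi ` T"
          then obtain k where k: "k \<in> T" "Phi x = Phi k" by auto
          have "k \<noteq> 0" "k \<in> S" using k T(2) by auto
          have xe: "x = (l1norm x / l1norm k) *\<^sub>R k" and tp: "l1norm x / l1norm k > 0"
            using Phi_eq_imp[OF k(2) \<open>k \<noteq> 0\<close>] True by auto
          have "(l1norm x / l1norm k) *\<^sub>R k \<in> S"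
            using sat[OF \<open>k \<in> S\<close> tp] xe True by simp
          then have "x \<in> S" using xe by simp
          then show False using False by simp
        qed
        then show ?thesis using False R by (simp add: indicator_def)
      qed
    qed
  qed
  have iD: "integrable lebesgue (\<lambda>x. R * indicator ?D x)"
    using T(3) by (metis lmeasurable_iff_integrable integrable_mult_right)
  have mv: "(\<lambda>x. wt X x * \<bar>indicator S x - indicator (Phi ` T) (Phi x)\<bar>) \<in> borel_measurable lebesgue"
    using wt_meas[OF mX] ind_Phi_meas[OF Bb] borel_measurable_indicator[OF mS]
    by (intro borel_measurable_times borel_measurable_abs borel_measurable_diff) auto
  have iv: "integrable lebesgue (\<lambda>x. wt X x * \<bar>indicator S x - indicator (Phi ` T) (Phi x)\<bar>)"
    by (rule Bochner_Integration.integrable_bound[OF iD mv])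
       (use bound R in \<open>auto intro!: AE_I2 simp: abs_mult abs_of_nonneg[OF wt_nonneg] indicator_def\<close>)
  have "(\<integral>x. wt X x * \<bar>indicator S x - indicator (Phi ` T) (Phi x)\<bar> \<partial>lebesgue) \<le> (\<integral>x. R * indicator ?D x \<partial>lebesgue)"
    by (rule Bochner_Integration.integral_mono[OF iv iD bound])
  also have "\<dots> = R * measure lebesgue ?D" by simp
  also have "\<dots> \<le> R * e"
  proof -
    have "measure lebesgue ?D < e" using T(3,4)
      by (metis emeasure_eq_measure2 ennreal_less_iff measure_nonneg)
    then show ?thesis using R by simp
  qed
  also have "\<dots> < \<delta>" using R d by (simp add: e_def)
  finally show "\<exists>v. PP X v \<and> integrable lebesgue (\<lambda>x. wt X x * \<bar>indicator S x - v x\<bar>) \<and>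
        (\<integral>x. wt X x * \<bar>indicator S x - v x\<bar> \<partial>lebesgue) < \<delta>"
    using iv PP_borel[OF cX mX Bb] by blast
qed


lemma PP_sum:
  assumes "finite J" "X \<in> sets lebesgue" "\<And>j. j \<in> J \<Longrightarrow> PP X (h j)" "\<And>j. j \<in> J \<Longrightarrow> h j \<in> borel_measurable lebesgue"
  shows "PP X (\<lambda>x. \<Sum>j\<in>J. h j x)"
  using assms(1,3,4)
proof (induction J rule: finite_induct)
  case empty then show ?case using PP_zero by simp
next
  case (insert j J)
  have "PP X (\<lambda>x. h j x + (\<Sum>j\<in>J. h j x))"
    by (rule PP_add) (use insert assms(2) in \<open>auto intro!: borel_measurable_sum\<close>)
  then show ?case using insert by simp
qed

lemma floor_sum:
  fixes c :: real and F :: "'a \<Rightarrow> real"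
  assumes "finite J"
  shows "(\<Sum>j\<in>J. (real_of_int j / c) * indicator {x\<in>X. \<lfloor>c * F x\<rfloor> = j} x) =
     (if x \<in> X \<and> \<lfloor>c * F x\<rfloor> \<in> J then real_of_int \<lfloor>c * F x\<rfloor> / c else 0)"
proof -
  have "(\<Sum>j\<in>J. (real_of_int j / c) * indicator {x\<in>X. \<lfloor>c * F x\<rfloor> = j} x) =
     (\<Sum>j\<in>J. if \<lfloor>c * F x\<rfloor> = j then (if x \<in> X then real_of_int j / c else 0) else 0)"
    by (intro sum.cong refl) (auto simp: indicator_def)
  also have "\<dots> = (if x \<in> X \<and> \<lfloor>c * F x\<rfloor> \<in> J then real_of_int \<lfloor>c * F x\<rfloor> / c else 0)"
    using assms by (simp add: sum.delta)
  finally show ?thesis .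
qed

lemma auxA: "\<bar>F\<bar> \<le> real k \<Longrightarrow> (c::real) > 0 \<Longrightarrow> - (real k * c) \<le> c * F"
proof -
  assume a: "\<bar>F\<bar> \<le> real k" "c > 0"
  have "-F \<le> real k" using a by linarith
  then have "c * (-F) \<le> c * real k" using a by (intro mult_left_mono) auto
  then show ?thesis by (simp add: mult.commute)
qed
lemma auxB: "- (real k * c) \<le> c * F \<Longrightarrow> real_of_int N = real k * c + 1 \<Longrightarrow> real_of_int (- N) \<le> real_of_int \<lfloor>c * F\<rfloor>"
proof -
  assume a: "- (real k * c) \<le> c * F" "real_of_int N = real k * c + 1"
  have "c * F - 1 < real_of_int \<lfloor>c * F\<rfloor>" by linarith
  moreover have "real_of_int (- N) = - (real k * c) - 1" using a by simp
  ultimately show ?thesis using a by linarith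
qed
lemma auxC: "(c::real) > 0 \<Longrightarrow> \<bar>F - real_of_int \<lfloor>c * F\<rfloor> / c\<bar> = \<bar>c * F - real_of_int \<lfloor>c * F\<rfloor>\<bar> / c"
proof -
  assume c: "c > 0"
  have "F - real_of_int \<lfloor>c * F\<rfloor> / c = (c * F - real_of_int \<lfloor>c * F\<rfloor>) / c" using c by (simp add: field_simps)
  then show ?thesis using c by (simp add: abs_divide)
qed
lemma auxD: "\<bar>z - real_of_int \<lfloor>z\<rfloor>\<bar> \<le> 1"
  by linarith

lemma floor_abs_le: "\<bar>real_of_int \<lfloor>z\<rfloor>\<bar> \<le> \<bar>z\<bar> + 1"
  using floor_le_iff[of z] le_floor_iff[of _ z] by linarith

lemma PP_F:
  fixes X :: "(real^'n::finite) set" and f :: "real^'n \<Rightarrow> real"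
  assumes cX: "compact X" and mX: "X \<in> sets lebesgue" and hom: "pos_homogeneous f"
    and int: "set_integrable lebesgue X f"
  shows "PP X (\<lambda>x. indicator X x * f x / l1norm x)"
proof -
  define F where "F x = indicator X x * f x / l1norm x" for x
  have f0: "f 0 = 0" using hom[unfolded pos_homogeneous_def, rule_format, of 2 0] by simp
  have mf: "(\<lambda>x. indicator X x *\<^sub>R f x) \<in> borel_measurable lebesgue"
    using int unfolding set_integrable_def by (rule borel_measurable_integrable)
  have mF[measurable]: "F \<in> borel_measurable lebesgue"
    unfolding F_def[abs_def] using mf cont_meas_leb[OF l1_cont] by (intro borel_measurable_divide) auto
  note mX[measurable]
  have Fsat: "F (t *\<^sub>R x) = F x" if "x \<in> X" "t > 0" "t *\<^sub>R x \<in> X" for x t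
  proof (cases "x = 0")
    case True then show ?thesis by simp
  next
    case False
    have "f (t *\<^sub>R x) = t * f x" using hom that unfolding pos_homogeneous_def by blast
    moreover have "l1norm (t *\<^sub>R x) = t * l1norm x" using that by (simp add: l1_scale)
    ultimately show ?thesis using that by (simp add: F_def)
  qed
  have wF: "wt X x * \<bar>F x\<bar> = \<bar>indicator X x *\<^sub>R f x\<bar>" for x
  proof (cases "x \<in> X \<and> x \<noteq> 0")
    case True
    then have "l1norm x > 0" using l1_nonneg[of x] l1_zero[of x] by linarith
    then show ?thesis using True by (simp add: wt_def F_def abs_mult abs_divide)
  next
    case False then show ?thesis by (auto simp: wt_def F_def f0 l1norm_def)
  qed
  have iwF: "integrable lebesgue (\<lambda>x. wt X x * \<bar>F x\<bar>)"
    unfolding wF using int unfolding set_integrable_def by (rule integrable_abs)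
  define c where "c k = (2::real) ^ k" for k :: nat
  have c1: "c k \<ge> 1" for k by (simp add: c_def)
  define N where "N k = int k * 2 ^ k + 1" for k :: nat
  have Nc: "real_of_int (N k) = real k * c k + 1" for k by (simp add: N_def c_def)
  define S where "S k j = {x\<in>X. \<lfloor>c k * F x\<rfloor> = j}" for k j
  define sk where "sk k x = (\<Sum>j\<in>{-N k..N k}. (real_of_int j / c k) * indicator (S k j) x)" for k x
  have sk_eq: "sk k x = (if x \<in> X \<and> \<lfloor>c k * F x\<rfloor> \<in> {-N k..N k} then real_of_int \<lfloor>c k * F x\<rfloor> / c k else 0)" for k x
    unfolding sk_def S_def by (rule floor_sum) simp
  have mS: "S k j \<in> sets lebesgue" for k j unfolding S_def by measurable
  have PS: "PP X (\<lambda>x. indicator (S k j) x)" for k j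
  proof (rule PP_sat[OF cX mX mS])
    show "S k j \<subseteq> X" by (auto simp: S_def)
    show "t *\<^sub>R x \<in> S k j" if "x \<in> S k j" "t > 0" "t *\<^sub>R x \<in> X" for x t
      using that Fsat[of x t] by (auto simp: S_def)
  qed
  have msk: "sk k \<in> borel_measurable lebesgue" for k
    unfolding sk_def[abs_def] using mS by (intro borel_measurable_sum borel_measurable_times borel_measurable_indicator) auto
  have Psk: "PP X (sk k)" for k
  proof -
    have "PP X (\<lambda>x. \<Sum>j\<in>{-N k..N k}. (real_of_int j / c k) * indicator (S k j) x)"
    proof (rule PP_sum[OF _ mX])
      fix j show "PP X (\<lambda>x. (real_of_int j / c k) * indicator (S k j) x)" by (rule PP_scale[OF PS])
      show "(\<lambda>x. (real_of_int j / c k) * indicator (S k j) x) \<in> borel_measurable lebesgue"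
        using mS by (intro borel_measurable_times borel_measurable_indicator) auto
    qed simp
    then show ?thesis unfolding sk_def[abs_def] .
  qed
  have skb: "\<bar>sk k x\<bar> \<le> \<bar>F x\<bar> + 1" for k x
  proof -
    have "\<bar>real_of_int \<lfloor>c k * F x\<rfloor> / c k\<bar> \<le> (\<bar>c k * F x\<bar> + 1) / c k"
      using floor_abs_le[of "c k * F x"] c1[of k] by (simp add: abs_divide divide_right_mono)
    also have "\<dots> = \<bar>F x\<bar> + 1 / c k" using c1[of k] by (simp add: abs_mult add_divide_distrib)
    also have "\<dots> \<le> \<bar>F x\<bar> + 1" using c1[of k] by simp
    finally show ?thesis by (simp add: sk_eq)
  qed
  show ?thesis unfolding F_def[symmetric]
  proof (rule PP_lim[OF mF mX])
    fix \<delta> :: real assume d: "\<delta> > 0"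
    define s where "s k x = wt X x * \<bar>F x - sk k x\<bar>" for k x
    have "\<exists>k. integrable lebesgue (s k) \<and> integral\<^sup>L lebesgue (s k) < \<delta>"
    proof (rule dc_small[where w = "\<lambda>x. 2 * (wt X x * \<bar>F x\<bar>) + wt X x", OF _ _ _ _ d])
      show "integrable lebesgue (\<lambda>x. 2 * (wt X x * \<bar>F x\<bar>) + wt X x)"
        using iwF wt_int[OF cX] by auto
      show "s k \<in> borel_measurable lebesgue" for k
        unfolding s_def[abs_def] using wt_meas[OF mX] msk mF
        by (intro borel_measurable_times borel_measurable_abs borel_measurable_diff) auto
      show "\<bar>s k x\<bar> \<le> 2 * (wt X x * \<bar>F x\<bar>) + wt X x" for k x
      proof -
        have "\<bar>F x - sk k x\<bar> \<le> 2 * \<bar>F x\<bar> + 1" using skb[of k x] by linarith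
        then have "wt X x * \<bar>F x - sk k x\<bar> \<le> wt X x * (2 * \<bar>F x\<bar> + 1)"
          using wt_nonneg by (intro mult_left_mono) auto
        then show ?thesis using wt_nonneg[of X x] by (simp add: s_def abs_mult algebra_simps)
      qed
      show "(\<lambda>k. s k x) \<longlonglongrightarrow> 0" for x
      proof (rule Lim_null_comparison)
        obtain n where n: "\<bar>F x\<bar> \<le> real n" using real_arch_simple by blast
        show "eventually (\<lambda>k. norm (s k x) \<le> wt X x * (1/2)^k) sequentially"
          unfolding eventually_sequentially
        proof (intro exI[of _ n] allI impI)
          fix k assume k: "n \<le> k"
          show "norm (s k x) \<le> wt X x * (1/2)^k"
          proof (cases "x \<in> X")
            case False then show ?thesis by (simp add: s_def wt_def)
          next
            case True
            have Fk: "\<bar>F x\<bar> \<le> real k" using n k by linarith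
            have ck: "c k > 0" using c1[of k] by linarith
            have a1: "c k * F x \<le> real k * c k" using Fk ck by (simp add: abs_le_iff mult.commute mult_left_mono)
            have a2: "- (real k * c k) \<le> c k * F x" using Fk ck
              by (rule auxA)
            have inJ: "\<lfloor>c k * F x\<rfloor> \<in> {-N k..N k}"
            proof -
              have "real_of_int \<lfloor>c k * F x\<rfloor> \<le> real_of_int (N k)" using a1 Nc[of k] by linarith
              moreover have "real_of_int (- N k) \<le> real_of_int \<lfloor>c k * F x\<rfloor>"
                using a2 Nc[of k] by (rule auxB)
              ultimately show ?thesis by simp
            qed
            have "\<bar>F x - sk k x\<bar> = \<bar>c k * F x - real_of_int \<lfloor>c k * F x\<rfloor>\<bar> / c k"
              using inJ True ck auxC[of "c k" "F x"] by (simp add: sk_eq)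
            also have "\<dots> \<le> 1 / c k"
              using ck auxD[of "c k * F x"] by (intro divide_right_mono) auto
            also have "\<dots> = (1/2)^k" by (simp add: c_def power_one_over)
            finally show ?thesis using wt_nonneg[of X x]
              by (simp add: s_def abs_mult mult_left_mono)
          qed
        qed
        show "(\<lambda>k. wt X x * (1/2)^k) \<longlonglongrightarrow> 0"
          by (rule tendsto_mult_right_zero) (simp add: LIMSEQ_realpow_zero)
      qed
    qed
    then show "\<exists>v. PP X v \<and> integrable lebesgue (\<lambda>x. wt X x * \<bar>F x - v x\<bar>) \<and>
        (\<integral>x. wt X x * \<bar>F x - v x\<bar> \<partial>lebesgue) < \<delta>"
      using Psk unfolding s_def[abs_def] by blast
  qed
qed


theorem mainTheorem7:
  fixes X :: "(real^'n) set" and f :: "real^'n \<Rightarrow> real" and \<epsilon> :: real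
  assumes "X \<in> sets lebesgue" and "compact X"
    and "pos_homogeneous f"
    and "set_integrable lebesgue X f"
    and "\<epsilon> > 0"
  shows "\<exists>N :: 'n relu_net. valid_net N \<and> net_width N \<le> CARD('n) + 4 \<and>
           set_integrable lebesgue X (\<lambda>x. \<bar>l1norm x * net_fun N (x /\<^sub>R l1norm x) - f x\<bar>) \<and>
           (LINT x:X|lebesgue. \<bar>l1norm x * net_fun N (x /\<^sub>R l1norm x) - f x\<bar>) < \<epsilon>"
proof -
  have f0: "f 0 = 0" using assms(3)[unfolded pos_homogeneous_def, rule_format, of 2 0] by simp
  obtain gs where gs: "integrable lebesgue (\<lambda>x. wt X x * \<bar>indicator X x * f x / l1norm x - gfun gs (Phi x)\<bar>)"
     "(\<integral>x. wt X x * \<bar>indicator X x * f x / l1norm x - gfun gs (Phi x)\<bar> \<partial>lebesgue) < \<epsilon>"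
    using PP_F[OF assms(2,1,3,4)] assms(5) unfolding PP_def by blast
  have nf: "net_fun (netof gs) (x /\<^sub>R l1norm x) = gfun gs (Phi x)" for x
  proof -
    have "\<forall>i\<in>Basis. \<bar>Phi x \<bullet> i\<bar> \<le> 2" using Phi_bound[of _ x] by (meson dual_order.trans one_le_numeral)
    then show ?thesis using net_fun_netof[of "Phi x" gs] by (simp add: Phi_def)
  qed
  have eq: "indicator X x *\<^sub>R \<bar>l1norm x * net_fun (netof gs) (x /\<^sub>R l1norm x) - f x\<bar>
      = wt X x * \<bar>indicator X x * f x / l1norm x - gfun gs (Phi x)\<bar>" for x
  proof (cases "x \<in> X \<and> x \<noteq> 0")
    case True
    then have p: "l1norm x > 0" using l1_nonneg[of x] l1_zero[of x] by linarith
    have "\<bar>l1norm x * gfun gs (Phi x) - f x\<bar> = l1norm x * \<bar>f x / l1norm x - gfun gs (Phi x)\<bar>"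
    proof -
      have "l1norm x * gfun gs (Phi x) - f x = l1norm x * (gfun gs (Phi x) - f x / l1norm x)"
        using p by (simp add: field_simps)
      then show ?thesis using p by (simp add: abs_mult abs_minus_commute)
    qed
    then show ?thesis using True by (simp add: nf wt_def)
  next
    case False
    then show ?thesis by (auto simp: wt_def f0 l1norm_def)
  qed
  show ?thesis
  proof (intro exI[of _ "netof gs"] conjI valid_netof width_netof)
    show "set_integrable lebesgue X (\<lambda>x. \<bar>l1norm x * net_fun (netof gs) (x /\<^sub>R l1norm x) - f x\<bar>)"
      unfolding set_integrable_def eq by (rule gs(1))
    show "(LINT x:X|lebesgue. \<bar>l1norm x * net_fun (netof gs) (x /\<^sub>R l1norm x) - f x\<bar>) < \<epsilon>"
      unfolding set_lebesgue_integral_def eq by (rule gs(2))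
  qed
qed

end
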